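(* Assume that the constants $\lambda_R>0$, $\delta \geq 0$, $\Delta_T \geq 0$, $\Delta_\alpha \geq 0$, and $C>0$ are such that the conditions listed in the context hold for the solution $\bar{\alpha}^s$, $\bar{\alpha}^t$, $\bar{T}$ of Problem 3. Then the difference between the rates of variation of the estimated source and target label functions $f^s = \bar{U}^s \bar{\alpha}^s$ and $f^t = \bar{U}^t \bar{T} \bar{\alpha}^t$ on the source and target graphs is bounded as \[ | (f^s)^T L^s f^s - (f^t)^T L^t f^t | \leq C^2 \delta + 2 C \lambda_R \Delta_\alpha + C^2 \lambda_R ( 2 \Delta_T + \Delta_T^2 ). \]
   Context: A source graph with $N_s$ nodes has graph Laplacian $L^s$ and a target graph with $N_t$ nodes has graph Laplacian $L^t$ (Laplacian $L=D-W$ with $W$ the weight matrix and $D$ the diagonal degree matrix). Let $0=\lambda_1^s \leq \dots \leq \lambda_R^s$ and $0=\lambda_1^t \leq \dots \leq \lambda_R^t$ be the $R$ smallest eigenvalues of $L^s$ and $L^t$, with $R<N_s$, $R<N_t$, and let $\bar{U}^s \in \mathbb{R}^{N_s \times R}$, $\bar{U}^t \in \mathbb{R}^{N_t \times R}$ contain the corresponding orthonormal eigenvectors (reduced graph Fourier bases). Problem 3 is \[ \min_{\bar{\alpha}^s, \bar{\alpha}^t, \bar{T}} \| S^s \bar{U}^s \bar{\alpha}^s - y^s \|^2 + \| S^t \bar{U}^t \bar{T} \bar{\alpha}^t - y^t \|^2 + \mu_1 \| \bar{\alpha}^s - \bar{\alpha}^t \|^2 + \mu_2 \| \bar{M} \odot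 \bar{T} \|_F^2 \] subject to $\sum_{i=1}^{R} \bar{T}_{ij}^2 = 1$ for $j=1,\dots,R$, where $S^s, S^t$ are binary selection matrices picking out labeled nodes, $y^s, y^t$ the known labels, $\bar{M}_{ij}=\exp((i-j)^2/\sigma^2)$, $\odot$ the Hadamard product, $\mu_1,\mu_2>0$, $\bar{T}\in\mathbb{R}^{R\times R}$. Conditions assumed for the solution: $| \lambda_i^s - \lambda_i^t | \leq \delta$ for all $i=1,\dots,R$; $\lambda_R = \max(\lambda_R^s, \lambda_R^t)$; $\| \bar{\alpha}^s - \bar{\alpha}^t \| \leq \Delta_\alpha$; $\| \bar{T} - I \| \leq \Delta_T$ where $I$ is the $R\times R$ identity and $\|\cdot\|$ denotes the operator norm for matrices; and $\| \bar{\alpha}^s \|, \| \bar{\alpha}^t \| \leq C$. *)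

theory Defs
  imports Complex_Main "Jordan_Normal_Form.Matrix"
begin

(* Matrices/vectors: Jordan_Normal_Form 'real mat' / 'real vec' with explicit
   dimensions. Indices are 0-based: paper's lambda_i is lam (i-1). *)

definition vnorm :: "real vec \<Rightarrow> real" where
  "vnorm v = sqrt (scalar_prod v v)"

definition opnorm :: "real mat \<Rightarrow> real" where
  "opnorm A = Sup {vnorm (A *\<^sub>v x) | x. x \<in> carrier_vec (dim_col A) \<and> vnorm x \<le> 1}"

definition hadamard :: "real mat \<Rightarrow> real mat \<Rightarrow> real mat" where
  "hadamard A B = mat (dim_row A) (dim_col A) (\<lambda>(i,j). A $$ (i,j) * B $$ (i,j))"

definition frob_sq :: "real mat \<Rightarrow> real" where
  "frob_sq A = (\<Sum>i<dim_row A. \<Sum>j<dim_col A. (A $$ (i,j))^2)"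

definition weight_matrix :: "nat \<Rightarrow> real mat \<Rightarrow> bool" where
  "weight_matrix n W \<longleftrightarrow> W \<in> carrier_mat n n \<and> transpose_mat W = W \<and>
     (\<forall>i<n. \<forall>j<n. W $$ (i,j) \<ge> 0)"

definition laplacian :: "real mat \<Rightarrow> real mat" where
  "laplacian W = mat (dim_row W) (dim_col W)
     (\<lambda>(i,j). (if i = j then (\<Sum>k<dim_col W. W $$ (i,k)) else 0) - W $$ (i,j))"

definition diag_of :: "nat \<Rightarrow> (nat \<Rightarrow> real) \<Rightarrow> real mat" where
  "diag_of n d = mat n n (\<lambda>(i,j). if i = j then d i else 0)"

(* lam 0 \<le> ... \<le> lam (R-1) are the R smallest eigenvalues (with multiplicity) of the
   N x N matrix L and the columns of U are corresponding orthonormal eigenvectors,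
   i.e. the first R columns of a full orthonormal eigenbasis with sorted eigenvalues. *)
definition reduced_fourier_basis :: "nat \<Rightarrow> nat \<Rightarrow> real mat \<Rightarrow> (nat \<Rightarrow> real) \<Rightarrow> real mat \<Rightarrow> bool" where
  "reduced_fourier_basis N R L lam U \<longleftrightarrow>
     U \<in> carrier_mat N R \<and>
     (\<exists>V mu. V \<in> carrier_mat N N \<and> transpose_mat V * V = 1\<^sub>m N \<and>
        L * V = V * diag_of N mu \<and>
        (\<forall>i j. i \<le> j \<longrightarrow> j < N \<longrightarrow> mu i \<le> mu j) \<and>
        (\<forall>j<R. col U j = col V j \<and> lam j = mu j))"

definition selection_matrix :: "nat \<Rightarrow> nat \<Rightarrow> real mat \<Rightarrow> bool" where
  "selection_matrix m N S \<longleftrightarrow> S \<in> carrier_mat m N \<and>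
     (\<exists>p. inj_on p {..<m} \<and> (\<forall>i<m. p i < N) \<and>
        (\<forall>i<m. \<forall>j<N. S $$ (i,j) = (if j = p i then 1 else 0)))"

definition Mbar :: "nat \<Rightarrow> real \<Rightarrow> real mat" where
  "Mbar R \<sigma> = mat R R (\<lambda>(i,j). exp ((real i - real j)^2 / \<sigma>^2))"

definition problem3_obj ::
  "real mat \<Rightarrow> real mat \<Rightarrow> real vec \<Rightarrow> real mat \<Rightarrow> real mat \<Rightarrow> real vec \<Rightarrow>
   real \<Rightarrow> real \<Rightarrow> real \<Rightarrow> nat \<Rightarrow> real vec \<Rightarrow> real vec \<Rightarrow> real mat \<Rightarrow> real" where
  "problem3_obj Ss Us ys St Ut yt \<mu>1 \<mu>2 \<sigma> R a_s a_t T =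
     (vnorm (Ss *\<^sub>v (Us *\<^sub>v a_s) - ys))^2
     + (vnorm (St *\<^sub>v (Ut *\<^sub>v (T *\<^sub>v a_t)) - yt))^2
     + \<mu>1 * (vnorm (a_s - a_t))^2 + \<mu>2 * frob_sq (hadamard (Mbar R \<sigma>) T)"

definition problem3_feasible :: "nat \<Rightarrow> real vec \<Rightarrow> real vec \<Rightarrow> real mat \<Rightarrow> bool" where
  "problem3_feasible R a_s a_t T \<longleftrightarrow> a_s \<in> carrier_vec R \<and> a_t \<in> carrier_vec R \<and>
     T \<in> carrier_mat R R \<and> (\<forall>j<R. (\<Sum>i<R. (T $$ (i,j))^2) = 1)"

definition problem3_solution ::
  "real mat \<Rightarrow> real mat \<Rightarrow> real vec \<Rightarrow> real mat \<Rightarrow> real mat \<Rightarrow> real vec \<Rightarrow>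
   real \<Rightarrow> real \<Rightarrow> real \<Rightarrow> nat \<Rightarrow> real vec \<Rightarrow> real vec \<Rightarrow> real mat \<Rightarrow> bool" where
  "problem3_solution Ss Us ys St Ut yt \<mu>1 \<mu>2 \<sigma> R a_s a_t T \<longleftrightarrow>
     problem3_feasible R a_s a_t T \<and>
     (\<forall>a_s' a_t' T'. problem3_feasible R a_s' a_t' T' \<longrightarrow>
        problem3_obj Ss Us ys St Ut yt \<mu>1 \<mu>2 \<sigma> R a_s a_t T
        \<le> problem3_obj Ss Us ys St Ut yt \<mu>1 \<mu>2 \<sigma> R a_s' a_t' T')"

end

theory Submission imports Defs "HOL-Analysis.L2_Norm" begin


lemma L2_sq: "(L2_set f A)^2 = (\<Sum>i\<in>A. (f i)^2)"
  unfolding L2_set_def by (simp add: sum_nonneg)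

lemma arith_main:
  fixes ls lt a c e :: "nat \<Rightarrow> real" and R :: nat
  defines "A \<equiv> {..<R}"
  assumes lt: "\<And>j. j < R \<Longrightarrow> 0 \<le> lt j \<and> lt j \<le> \<Lambda>"
    and ld: "\<And>j. j < R \<Longrightarrow> \<bar>ls j - lt j\<bar> \<le> \<delta>"
    and na: "L2_set a A \<le> C" and nc: "L2_set c A \<le> C"
    and nac: "L2_set (\<lambda>i. a i - c i) A \<le> D\<alpha>"
    and ne: "L2_set e A \<le> DT * C" and DT: "DT \<ge> 0" and Lnn: "\<Lambda> \<ge> 0" and d0: "\<delta> \<ge> 0"
  shows "\<bar>(\<Sum>j\<in>A. ls j * (a j)^2) - (\<Sum>j\<in>A. lt j * (c j + e j)^2)\<bar>
     \<le> C^2 * \<delta> + 2 * C * \<Lambda> * D\<alpha> + C^2 * \<Lambda> * (2 * DT + DT^2)"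
proof -
  have C0: "0 \<le> C" using na L2_set_nonneg[of a A] by linarith
  have d1: "\<bar>(\<Sum>j\<in>A. ls j * (a j)^2) - (\<Sum>j\<in>A. lt j * (a j)^2)\<bar> \<le> C^2 * \<delta>"
  proof -
    have "\<bar>(\<Sum>j\<in>A. ls j * (a j)^2) - (\<Sum>j\<in>A. lt j * (a j)^2)\<bar>
        = \<bar>\<Sum>j\<in>A. (ls j - lt j) * (a j)^2\<bar>"
      by (simp add: sum_subtractf[symmetric] algebra_simps)
    also have "\<dots> \<le> (\<Sum>j\<in>A. \<bar>(ls j - lt j) * (a j)^2\<bar>)" by (rule sum_abs)
    also have "\<dots> \<le> (\<Sum>j\<in>A. \<delta> * (a j)^2)"
      by (rule sum_mono) (auto simp: A_def abs_mult intro!: mult_right_mono ld)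
    also have "\<dots> = \<delta> * (L2_set a A)^2" by (simp add: L2_sq sum_distrib_left)
    also have "\<dots> \<le> \<delta> * C^2"
      using d0 na by (auto intro!: mult_left_mono power_mono)
    finally show ?thesis by (simp add: mult.commute)
  qed
  have d2: "\<bar>(\<Sum>j\<in>A. lt j * (a j)^2) - (\<Sum>j\<in>A. lt j * (c j)^2)\<bar> \<le> 2 * C * \<Lambda> * D\<alpha>"
  proof -
    have "\<bar>(\<Sum>j\<in>A. lt j * (a j)^2) - (\<Sum>j\<in>A. lt j * (c j)^2)\<bar>
        = \<bar>\<Sum>j\<in>A. lt j * ((a j - c j) * (a j + c j))\<bar>"
      by (simp add: sum_subtractf[symmetric] algebra_simps power2_eq_square)
    also have "\<dots> \<le> (\<Sum>j\<in>A. \<bar>lt j * ((a j - c j) * (a j + c j))\<bar>)" by (rule sum_abs)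
    also have "\<dots> \<le> (\<Sum>j\<in>A. \<Lambda> * (\<bar>a j - c j\<bar> * \<bar>a j + c j\<bar>))"
      by (rule sum_mono) (auto simp: A_def abs_mult dest: lt intro!: mult_right_mono)
    also have "\<dots> = \<Lambda> * (\<Sum>j\<in>A. \<bar>a j - c j\<bar> * \<bar>a j + c j\<bar>)" by (simp add: sum_distrib_left)
    also have "\<dots> \<le> \<Lambda> * (L2_set (\<lambda>i. a i - c i) A * L2_set (\<lambda>i. a i + c i) A)"
      by (rule mult_left_mono[OF L2_set_mult_ineq Lnn])
    also have "\<dots> \<le> \<Lambda> * (D\<alpha> * (2 * C))"
    proof -
      have "L2_set (\<lambda>i. a i + c i) A \<le> 2 * C"
        using L2_set_triangle_ineq[of a c A] na nc by linarith
      moreover have "0 \<le> D\<alpha>" using nac L2_set_nonneg[of "\<lambda>i. a i - c i" A] by linarith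
      ultimately show ?thesis using nac Lnn
        by (intro mult_left_mono mult_mono) auto
    qed
    finally show ?thesis by (simp add: algebra_simps)
  qed
  have d3: "\<bar>(\<Sum>j\<in>A. lt j * (c j)^2) - (\<Sum>j\<in>A. lt j * (c j + e j)^2)\<bar> \<le> C^2 * \<Lambda> * (2 * DT + DT^2)"
  proof -
    have "\<bar>(\<Sum>j\<in>A. lt j * (c j)^2) - (\<Sum>j\<in>A. lt j * (c j + e j)^2)\<bar>
        = \<bar>\<Sum>j\<in>A. lt j * (2 * (c j * e j) + (e j)^2)\<bar>"
      by (subst abs_minus_commute) (simp add: sum_subtractf[symmetric] algebra_simps power2_eq_square)
    also have "\<dots> \<le> (\<Sum>j\<in>A. \<bar>lt j * (2 * (c j * e j) + (e j)^2)\<bar>)" by (rule sum_abs)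
    also have "\<dots> \<le> (\<Sum>j\<in>A. \<Lambda> * (2 * (\<bar>c j\<bar> * \<bar>e j\<bar>) + (e j)^2))"
    proof (rule sum_mono)
      fix j assume "j \<in> A"
      then have "0 \<le> lt j" "lt j \<le> \<Lambda>" using lt by (auto simp: A_def)
      moreover have "\<bar>2 * (c j * e j) + (e j)^2\<bar> \<le> 2 * (\<bar>c j\<bar> * \<bar>e j\<bar>) + (e j)^2"
        by (simp add: abs_mult abs_triangle_ineq[THEN order_trans])
      ultimately show "\<bar>lt j * (2 * (c j * e j) + (e j)^2)\<bar> \<le> \<Lambda> * (2 * (\<bar>c j\<bar> * \<bar>e j\<bar>) + (e j)^2)"
        by (simp add: abs_mult) (meson abs_ge_zero mult_mono order_trans)
    qed
    also have "\<dots> = \<Lambda> * (2 * (\<Sum>j\<in>A. \<bar>c j\<bar> * \<bar>e j\<bar>) + (L2_set e A)^2)"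
      by (simp add: L2_sq sum_distrib_left[symmetric] sum.distrib)
    also have "\<dots> \<le> \<Lambda> * (2 * (L2_set c A * L2_set e A) + (L2_set e A)^2)"
      using L2_set_mult_ineq[of c e A] Lnn by (intro mult_left_mono) auto
    also have "\<dots> \<le> \<Lambda> * (2 * (C * (DT * C)) + (DT * C)^2)"
      using nc ne Lnn C0 DT by (intro mult_left_mono add_mono mult_mono power_mono) auto
    finally show ?thesis by (simp add: algebra_simps power2_eq_square)
  qed
  show ?thesis using d1 d2 d3 by linarith
qed



lemma mult_diag_index:
  assumes "A \<in> carrier_mat n m" "i < n" "j < m"
  shows "(A * diag_of m d) $$ (i,j) = A $$ (i,j) * d j"
proof -
  have "(A * diag_of m d) $$ (i,j) = (\<Sum>k\<in>{0..<m}. A $$ (i,k) * (if k = j then d k else 0))"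
    using assms by (simp add: scalar_prod_def diag_of_def cong: if_cong)
  also have "\<dots> = (\<Sum>k\<in>{0..<m}. if k = j then A $$ (i,j) * d j else 0)"
    by (rule sum.cong) auto
  also have "\<dots> = A $$ (i,j) * d j" using assms by simp
  finally show ?thesis .
qed

lemma rfb_props:
  assumes "reduced_fourier_basis N R L lam U" "L \<in> carrier_mat N N" "R \<le> N"
  shows "U \<in> carrier_mat N R" "L * U = U * diag_of R lam" "transpose_mat U * U = 1\<^sub>m R"
    "\<forall>i j. i \<le> j \<longrightarrow> j < R \<longrightarrow> lam i \<le> lam j"
proof -
  obtain V mu where U: "U \<in> carrier_mat N N \<Longrightarrow> True" and V: "V \<in> carrier_mat N N"
    and VV: "transpose_mat V * V = 1\<^sub>m N" and LV: "L * V = V * diag_of N mu"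
    and mon: "\<forall>i j. i \<le> j \<longrightarrow> j < N \<longrightarrow> mu i \<le> mu j"
    and cl: "\<forall>j<R. col U j = col V j \<and> lam j = mu j"
    using assms(1) unfolding reduced_fourier_basis_def by blast
  show Uc: "U \<in> carrier_mat N R" using assms(1) unfolding reduced_fourier_basis_def by blast
  show "\<forall>i j. i \<le> j \<longrightarrow> j < R \<longrightarrow> lam i \<le> lam j" using mon cl assms(3) by auto
  have UV: "U $$ (i,j) = V $$ (i,j)" if "i < N" "j < R" for i j
  proof -
    have "U $$ (i,j) = col U j $ i" using Uc that by simp
    also have "\<dots> = col V j $ i" using cl that by simp
    also have "\<dots> = V $$ (i,j)" using V that assms(3) by simp
    finally show ?thesis .
  qed
  show "L * U = U * diag_of R lam"
  proof (rule eq_matI)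
    fix i j assume ij: "i < dim_row (U * diag_of R lam)" "j < dim_col (U * diag_of R lam)"
    hence i: "i < N" and j: "j < R" using Uc by (auto simp: diag_of_def)
    have "(L * U) $$ (i,j) = row L i \<bullet> col U j" using i j assms(2) Uc by simp
    also have "\<dots> = row L i \<bullet> col V j" using cl j by simp
    also have "\<dots> = (L * V) $$ (i,j)" using i j assms(2,3) V by simp
    also have "\<dots> = V $$ (i,j) * mu j" unfolding LV using V i j assms(3) by (simp add: mult_diag_index)
    also have "\<dots> = U $$ (i,j) * lam j" using UV i j cl by simp
    also have "\<dots> = (U * diag_of R lam) $$ (i,j)" using Uc i j by (simp add: mult_diag_index)
    finally show "(L * U) $$ (i,j) = (U * diag_of R lam) $$ (i,j)" .
  qed (use Uc assms(2) in \<open>auto simp: diag_of_def\<close>)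
  show "transpose_mat U * U = 1\<^sub>m R"
  proof (rule eq_matI)
    fix i j assume ij: "i < dim_row (1\<^sub>m R :: real mat)" "j < dim_col (1\<^sub>m R :: real mat)"
    hence i: "i < R" and j: "j < R" by auto
    have "(transpose_mat U * U) $$ (i,j) = col U i \<bullet> col U j" using i j Uc by simp
    also have "\<dots> = col V i \<bullet> col V j" using cl i j by simp
    also have "\<dots> = (transpose_mat V * V) $$ (i,j)" using i j V assms(3) by simp
    also have "\<dots> = (1\<^sub>m R :: real mat) $$ (i,j)" unfolding VV using i j assms(3) by simp
    finally show "(transpose_mat U * U) $$ (i,j) = 1\<^sub>m R $$ (i,j)" .
  qed (use Uc in auto)
qed

lemma quad_form:
  assumes "reduced_fourier_basis N R L lam U" "L \<in> carrier_mat N N" "R \<le> N"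
    and a: "a \<in> carrier_vec R"
  shows "(U *\<^sub>v a) \<bullet> (L *\<^sub>v (U *\<^sub>v a)) = (\<Sum>j<R. lam j * (a $ j)^2)"
proof -
  note P = rfb_props[OF assms(1-3)]
  have D: "diag_of R lam \<in> carrier_mat R R" by (simp add: diag_of_def)
  have "L *\<^sub>v (U *\<^sub>v a) = (L * U) *\<^sub>v a" using P(1) assms(2) a by simp
  also have "\<dots> = U *\<^sub>v (diag_of R lam *\<^sub>v a)" unfolding P(2) using P(1) D a by simp
  finally have 1: "L *\<^sub>v (U *\<^sub>v a) = U *\<^sub>v (diag_of R lam *\<^sub>v a)" .
  have "(U *\<^sub>v a) \<bullet> (U *\<^sub>v (diag_of R lam *\<^sub>v a)) = (transpose_mat U *\<^sub>v (U *\<^sub>v a)) \<bullet> (diag_of R lam *\<^sub>v a)"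
    using transpose_vec_mult_scalar[OF P(1), of "diag_of R lam *\<^sub>v a" "U *\<^sub>v a"] D a P(1) by simp
  also have "transpose_mat U *\<^sub>v (U *\<^sub>v a) = a"
    using assoc_mult_mat_vec[of "transpose_mat U" R N U R a] P(1,3) a by simp
  also have "a \<bullet> (diag_of R lam *\<^sub>v a) = (\<Sum>j\<in>{0..<R}. a $ j * (lam j * a $ j))"
  proof -
    have "(diag_of R lam *\<^sub>v a) $ j = lam j * a $ j" if "j < R" for j
    proof -
      have "(diag_of R lam *\<^sub>v a) $ j = (\<Sum>k\<in>{0..<R}. (if j = k then lam j else 0) * a $ k)"
        using that a by (simp add: diag_of_def scalar_prod_def)
      also have "\<dots> = (\<Sum>k\<in>{0..<R}. if k = j then lam j * a $ j else 0)" by (rule sum.cong) auto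
      finally show ?thesis using that by simp
    qed
    thus ?thesis using D a by (simp add: scalar_prod_def)
  qed
  finally show ?thesis unfolding 1 by (simp add: atLeast0LessThan power2_eq_square algebra_simps)
qed



lemma vnorm_L2: "vnorm v = L2_set (\<lambda>i. v $ i) {..<dim_vec v}"
  unfolding vnorm_def L2_set_def scalar_prod_def by (simp add: atLeast0LessThan power2_eq_square)

lemma lap_psd:
  assumes W: "weight_matrix N W" and x: "x \<in> carrier_vec N"
  shows "0 \<le> x \<bullet> (laplacian W *\<^sub>v x)"
proof -
  have Wc: "W \<in> carrier_mat N N" and sym: "\<And>i j. i < N \<Longrightarrow> j < N \<Longrightarrow> W $$ (j,i) = W $$ (i,j)"
    and nn: "\<And>i j. i < N \<Longrightarrow> j < N \<Longrightarrow> 0 \<le> W $$ (i,j)"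
    using W unfolding weight_matrix_def
    by (auto, metis index_transpose_mat(1) carrier_matD(1) carrier_matD(2))
  have row: "(laplacian W *\<^sub>v x) $ i = (\<Sum>j<N. W $$ (i,j) * (x $ i - x $ j))" if i: "i < N" for i
  proof -
    have "(laplacian W *\<^sub>v x) $ i = (\<Sum>j\<in>{0..<N}. ((if i = j then (\<Sum>k<N. W $$ (i,k)) else 0) - W $$ (i,j)) * x $ j)"
      using i Wc x carrier_matD[OF Wc] by (simp add: laplacian_def scalar_prod_def cong: if_cong)
    also have "\<dots> = (\<Sum>j\<in>{0..<N}. (if i = j then (\<Sum>k<N. W $$ (i,k)) else 0) * x $ j) - (\<Sum>j\<in>{0..<N}. W $$ (i,j) * x $ j)"
      by (simp only: sum_subtractf[symmetric] left_diff_distrib)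
    also have "(\<Sum>j\<in>{0..<N}. (if i = j then (\<Sum>k<N. W $$ (i,k)) else 0) * x $ j) = (\<Sum>j\<in>{0..<N}. if j = i then (\<Sum>k<N. W $$ (i,k)) * x $ i else 0)"
      by (rule sum.cong) auto
    also have "\<dots> = (\<Sum>k<N. W $$ (i,k)) * x $ i" using i by simp
    also have "(\<Sum>j\<in>{0..<N}. W $$ (i,j) * x $ j) = (\<Sum>j<N. W $$ (i,j) * x $ j)"
      by (simp add: atLeast0LessThan)
    finally have "(laplacian W *\<^sub>v x) $ i = (\<Sum>k<N. W $$ (i,k)) * x $ i - (\<Sum>j<N. W $$ (i,j) * x $ j)" .
    also have "\<dots> = (\<Sum>j<N. W $$ (i,j) * (x $ i - x $ j))"
      by (simp add: sum_distrib_right sum_subtractf[symmetric] right_diff_distrib)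
    finally show ?thesis .
  qed
  define S where "S = (\<Sum>i<N. \<Sum>j<N. W $$ (i,j) * (x $ i * (x $ i - x $ j)))"
  have S1: "x \<bullet> (laplacian W *\<^sub>v x) = S"
  proof -
    have "x \<bullet> (laplacian W *\<^sub>v x) = (\<Sum>i<N. x $ i * (laplacian W *\<^sub>v x) $ i)"
      using x carrier_matD[OF Wc] by (simp add: scalar_prod_def atLeast0LessThan laplacian_def)
    also have "\<dots> = (\<Sum>i<N. x $ i * (\<Sum>j<N. W $$ (i,j) * (x $ i - x $ j)))"
      by (rule sum.cong) (auto simp: row)
    also have "\<dots> = S" unfolding S_def by (simp add: sum_distrib_left algebra_simps)
    finally show ?thesis .
  qed
  have "S = (\<Sum>j<N. \<Sum>i<N. W $$ (i,j) * (x $ i * (x $ i - x $ j)))"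
    unfolding S_def by (rule sum.swap)
  also have "\<dots> = (\<Sum>j<N. \<Sum>i<N. W $$ (j,i) * (x $ i * (x $ i - x $ j)))"
    by (intro sum.cong refl) (simp add: sym)
  finally have S2: "S = (\<Sum>i<N. \<Sum>j<N. W $$ (i,j) * (x $ j * (x $ j - x $ i)))" .
  have "2 * S = (\<Sum>i<N. \<Sum>j<N. W $$ (i,j) * (x $ i - x $ j)^2)"
    apply (subst mult_2, subst (1) S_def, subst S2)
    by (simp add: sum.distrib[symmetric] power2_eq_square algebra_simps)
  also have "\<dots> \<ge> 0" by (intro sum_nonneg) (simp add: nn)
  finally show ?thesis using S1 by simp
qed

lemma vnorm_smult: "vnorm (k \<cdot>\<^sub>v v) = \<bar>k\<bar> * vnorm v"
proof -
  have "scalar_prod (k \<cdot>\<^sub>v v) (k \<cdot>\<^sub>v v) = k^2 * scalar_prod v v"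
    by (simp add: scalar_prod_def sum_distrib_left power2_eq_square algebra_simps)
  thus ?thesis unfolding vnorm_def by (simp add: real_sqrt_mult)
qed

lemma vnorm_bound:
  assumes E: "E \<in> carrier_mat n n" and x: "x \<in> carrier_vec n" and "vnorm x \<le> 1"
  shows "vnorm (E *\<^sub>v x) \<le> (\<Sum>i<n. \<Sum>j<n. \<bar>E $$ (i,j)\<bar>)"
proof -
  have xj: "\<bar>x $ j\<bar> \<le> 1" if "j < n" for j
  proof -
    have "\<bar>x $ j\<bar> \<le> L2_set (\<lambda>i. \<bar>x $ i\<bar>) {..<n}" using that by (intro member_le_L2_set) auto
    also have "\<dots> = vnorm x" using x by (simp add: vnorm_L2 L2_set_def)
    finally show ?thesis using assms(3) by simp
  qed
  have "vnorm (E *\<^sub>v x) = L2_set (\<lambda>i. (E *\<^sub>v x) $ i) {..<n}"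
    using E by (simp add: vnorm_L2)
  also have "\<dots> \<le> (\<Sum>i<n. \<bar>(E *\<^sub>v x) $ i\<bar>)"
    by (rule L2_set_le_sum_abs)
  also have "\<dots> \<le> (\<Sum>i<n. \<Sum>j<n. \<bar>E $$ (i,j)\<bar>)"
  proof (rule sum_mono)
    fix i assume i: "i \<in> {..<n}"
    have "\<bar>(E *\<^sub>v x) $ i\<bar> = \<bar>\<Sum>j<n. E $$ (i,j) * x $ j\<bar>"
      using E x i by (simp add: scalar_prod_def atLeast0LessThan)
    also have "\<dots> \<le> (\<Sum>j<n. \<bar>E $$ (i,j) * x $ j\<bar>)" by (rule sum_abs)
    also have "\<dots> \<le> (\<Sum>j<n. \<bar>E $$ (i,j)\<bar>)"
      by (rule sum_mono) (auto simp: abs_mult intro: mult_left_le xj)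
    finally show "\<bar>(E *\<^sub>v x) $ i\<bar> \<le> (\<Sum>j<n. \<bar>E $$ (i,j)\<bar>)" .
  qed
  finally show ?thesis .
qed

lemma opnorm_apply:
  assumes E: "E \<in> carrier_mat n n" and op: "opnorm E \<le> D" and c: "c \<in> carrier_vec n"
  shows "vnorm (E *\<^sub>v c) \<le> D * vnorm c"
proof (cases "vnorm c = 0")
  case True
  then have "c = 0\<^sub>v n" using c unfolding vnorm_L2
    by (subst (asm) L2_set_eq_0_iff) auto
  moreover have "E *\<^sub>v 0\<^sub>v n = 0\<^sub>v n" using E by (intro eq_vecI) auto
  ultimately show ?thesis using E True by (simp add: vnorm_def)
next
  case False
  define k where "k = 1 / vnorm c"
  have pos: "vnorm c > 0" using False unfolding vnorm_L2 using L2_set_nonneg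
    by (metis less_eq_real_def)
  let ?x = "k \<cdot>\<^sub>v c"
  have xc: "?x \<in> carrier_vec n" using c by simp
  have xn: "vnorm ?x \<le> 1" using pos by (simp add: vnorm_smult k_def)
  have bdd: "bdd_above {vnorm (E *\<^sub>v x) | x. x \<in> carrier_vec (dim_col E) \<and> vnorm x \<le> 1}"
    using vnorm_bound[OF E] E by (intro bdd_aboveI[where M="\<Sum>i<n. \<Sum>j<n. \<bar>E $$ (i,j)\<bar>"]) auto
  have "vnorm (E *\<^sub>v ?x) \<le> opnorm E"
    unfolding opnorm_def by (rule cSup_upper[OF _ bdd]) (use xc xn E in auto)
  also have "E *\<^sub>v ?x = k \<cdot>\<^sub>v (E *\<^sub>v c)" using mult_mat_vec[OF E c] by simp
  finally have "k * vnorm (E *\<^sub>v c) \<le> D" using op pos by (simp add: vnorm_smult k_def)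
  then show ?thesis using pos by (simp add: k_def field_simps)
qed



theorem proposition1:
  fixes Ns Nt R ms mt :: nat
    and Ws Wt Us Ut Ss St T :: "real mat"
    and lams lamt :: "nat \<Rightarrow> real"
    and ys yt a_s a_t :: "real vec"
    and \<mu>1 \<mu>2 \<sigma> lamR \<delta> \<Delta>T \<Delta>\<alpha> C :: real
  assumes "0 < R" "R < Ns" "R < Nt"
    and "weight_matrix Ns Ws" "weight_matrix Nt Wt"
    and "reduced_fourier_basis Ns R (laplacian Ws) lams Us"
    and "reduced_fourier_basis Nt R (laplacian Wt) lamt Ut"
    and "selection_matrix ms Ns Ss" "selection_matrix mt Nt St"
    and "ys \<in> carrier_vec ms" "yt \<in> carrier_vec mt"
    and "\<mu>1 > 0" "\<mu>2 > 0" "\<sigma> > 0"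
    and "problem3_solution Ss Us ys St Ut yt \<mu>1 \<mu>2 \<sigma> R a_s a_t T"
    and "lamR > 0" "\<delta> \<ge> 0" "\<Delta>T \<ge> 0" "\<Delta>\<alpha> \<ge> 0" "C > 0"
    and "\<forall>i<R. \<bar>lams i - lamt i\<bar> \<le> \<delta>"
    and "lamR = max (lams (R - 1)) (lamt (R - 1))"
    and "vnorm (a_s - a_t) \<le> \<Delta>\<alpha>"
    and "opnorm (T - 1\<^sub>m R) \<le> \<Delta>T"
    and "vnorm a_s \<le> C" "vnorm a_t \<le> C"
  shows "\<bar>scalar_prod (Us *\<^sub>v a_s) (laplacian Ws *\<^sub>v (Us *\<^sub>v a_s))
          - scalar_prod (Ut *\<^sub>v (T *\<^sub>v a_t)) (laplacian Wt *\<^sub>v (Ut *\<^sub>v (T *\<^sub>v a_t)))\<bar>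
         \<le> C^2 * \<delta> + 2 * C * lamR * \<Delta>\<alpha> + C^2 * lamR * (2 * \<Delta>T + \<Delta>T^2)"
proof -
  have as: "a_s \<in> carrier_vec R" and at: "a_t \<in> carrier_vec R" and Tc: "T \<in> carrier_mat R R"
    using assms(15) unfolding problem3_solution_def problem3_feasible_def by auto
  have Lsc: "laplacian Ws \<in> carrier_mat Ns Ns" using assms(4)
    unfolding weight_matrix_def laplacian_def by auto
  have Ltc: "laplacian Wt \<in> carrier_mat Nt Nt" using assms(5)
    unfolding weight_matrix_def laplacian_def by auto
  have RNs: "R \<le> Ns" and RNt: "R \<le> Nt" using assms(2,3) by auto
  note Ps = rfb_props[OF assms(6) Lsc RNs]
  note Pt = rfb_props[OF assms(7) Ltc RNt]
  define e where "e = (T - 1\<^sub>m R) *\<^sub>v a_t"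
  have eq_e: "e = T *\<^sub>v a_t - a_t" unfolding e_def
    using minus_mult_distrib_mat_vec[OF Tc _ at, of "1\<^sub>m R"] at by simp
  have ec: "e \<in> carrier_vec R" using Tc at unfolding eq_e by simp
  have Tat: "(T *\<^sub>v a_t) $ j = a_t $ j + e $ j" if "j < R" for j
    using that Tc at unfolding eq_e by simp
  have Tatc: "T *\<^sub>v a_t \<in> carrier_vec R" using Tc at by simp
  have q1: "scalar_prod (Us *\<^sub>v a_s) (laplacian Ws *\<^sub>v (Us *\<^sub>v a_s)) = (\<Sum>j<R. lams j * (a_s $ j)^2)"
    by (rule quad_form[OF assms(6) Lsc RNs as])
  have q2: "scalar_prod (Ut *\<^sub>v (T *\<^sub>v a_t)) (laplacian Wt *\<^sub>v (Ut *\<^sub>v (T *\<^sub>v a_t)))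
      = (\<Sum>j<R. lamt j * (a_t $ j + e $ j)^2)"
    unfolding quad_form[OF assms(7) Ltc RNt Tatc] by (rule sum.cong) (auto simp: Tat)
  have lt: "0 \<le> lamt j \<and> lamt j \<le> lamR" if j: "j < R" for j
  proof
    let ?u = "unit_vec R j :: real vec"
    have "0 \<le> scalar_prod (Ut *\<^sub>v ?u) (laplacian Wt *\<^sub>v (Ut *\<^sub>v ?u))"
      by (rule lap_psd[OF assms(5)]) (use Pt(1) in simp)
    also have "\<dots> = (\<Sum>k<R. lamt k * (?u $ k)^2)"
      by (rule quad_form[OF assms(7) Ltc RNt]) simp
    also have "\<dots> = (\<Sum>k<R. if k = j then lamt j else 0)"
      by (rule sum.cong) (use j in auto)
    also have "\<dots> = lamt j" using j by simp
    finally show "0 \<le> lamt j" .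
    have "lamt j \<le> lamt (R - 1)" using Pt(4) j by auto
    thus "lamt j \<le> lamR" using assms(22) by simp
  qed
  have na: "L2_set (($) a_s) {..<R} \<le> C" using assms(25) as by (simp add: vnorm_L2)
  have nc: "L2_set (($) a_t) {..<R} \<le> C" using assms(26) at by (simp add: vnorm_L2)
  have nac: "L2_set (\<lambda>i. a_s $ i - a_t $ i) {..<R} \<le> \<Delta>\<alpha>"
  proof -
    have "vnorm (a_s - a_t) = L2_set (\<lambda>i. a_s $ i - a_t $ i) {..<R}"
      unfolding vnorm_L2 using as at by (intro L2_set_cong) auto
    thus ?thesis using assms(23) by simp
  qed
  have ne: "L2_set (($) e) {..<R} \<le> \<Delta>T * C"
  proof -
    have TI: "T - 1\<^sub>m R \<in> carrier_mat R R" using Tc by (simp add: minus_carrier_mat)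
    have "vnorm e \<le> \<Delta>T * vnorm a_t"
      unfolding e_def by (rule opnorm_apply[OF TI assms(24) at])
    also have "\<dots> \<le> \<Delta>T * C" using assms(18,26) by (simp add: mult_left_mono)
    finally show ?thesis using ec by (simp add: vnorm_L2)
  qed
  have "\<bar>(\<Sum>j<R. lams j * (a_s $ j)^2) - (\<Sum>j<R. lamt j * (a_t $ j + e $ j)^2)\<bar>
     \<le> C^2 * \<delta> + 2 * C * lamR * \<Delta>\<alpha> + C^2 * lamR * (2 * \<Delta>T + \<Delta>T^2)"
    by (rule arith_main[OF lt _ na nc nac ne assms(18)])
      (use assms(16,17,21) in auto)
  thus ?thesis unfolding q1 q2 .
qed

end
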